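(* Let $(V,\nu,\tau,\tau^* )$ be a finite dimensional PN space such that $\tau^*$ is Archimedean, $\nu_p\neq\varepsilon_\infty$ for every $p\in V$, $\nu(V)\subseteq D^+$ and $\tau(D^+\times D^+)\subseteq D^+$, where the real scalar field is regarded as a PN space $(\mathbb{R},\nu',\tau',\tau'^{*})$ with $\tau'^{*}$ Archimedean, $\nu'_r\neq\varepsilon_\infty$ for all $r\in\mathbb{R}$, and $\nu'$ having the LG-property (for every $x>0$, $\lim_{r\to\infty}\nu'_r(x)=0$). Then a subset $A$ of $V$ is $D$-compact if and only if $A$ is $D$-bounded and closed (in the strong topology).
   Context: $\Delta^{+}$ is the set of functions $F:[-\infty,+\infty]\to[0,1]$ that are left-continuous on $\mathbb{R}$, nondecreasing, with $F(0)=0$ and $F(+\infty)=1$, ordered pointwise; $D^{+}=\{F\in\Delta^{+}: l^{-}F(+\infty)=1\}$, where $l^{-}f(x)=\lim_{t\to x^{-}}f(t)$. $\varepsilon_0$ is the d.f. equal to $0$ for $x\le0$ and $1$ for $x>0$; $\varepsilon_\infty$ is the d.f. equal to $0$ on all of $\mathbb{R}$. A triangle function is a map $\tau:\Delta^+\times\Delta^+\to\Delta^+$ that is associative, commutative, nondecreasing in each argument, with unit $\varepsilon_0$; it is Archimedean if its only idempotents are $\varepsilon_0$ and $\varepsilon_\infty$. A PN space is a quadruple $(V,\nu,\tau,\tau^* )$ with $V$ a real vector space, $\tau\le\tau^*$ continuous triangle functions, and $\nu:V\to\Delta^+$ such that for all $p,q\in V$: (N1) $\nu_p=\varepsilon_0$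 iff $p=\theta$; (N2) $\nu_{-p}=\nu_p$; (N3) $\nu_{p+q}\ge\tau(\nu_p,\nu_q)$; (N4) $\nu_p\le\tau^*(\nu_{\lambda p},\nu_{(1-\lambda)p})$ for all $\lambda\in[0,1]$. The strong topology is generated by $N_p(\lambda)=\{q:\nu_{p-q}(\lambda)>1-\lambda\}$, $\lambda>0$; $(p_m)$ strongly converges to $p$ if for every $\lambda>0$ eventually $p_m\in N_p(\lambda)$. For nonempty $A\subseteq V$, $R_A(x)=l^{-}\inf\{\nu_q(x):q\in A\}$ for $x\in[0,+\infty)$, $R_A(+\infty)=1$; $A$ is $D$-bounded if $R_A\in D^+$. $A$ is $D$-compact if every sequence in $A$ has a subsequence strongly converging to a vector of $A$. *)

theory Defs
  imports "HOL-Analysis.Analysis"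
begin

type_synonym dfun = "ereal \<Rightarrow> real"

definition Delta_plus :: "dfun set" where
  "Delta_plus = {F. (\<forall>x. 0 \<le> F x \<and> F x \<le> 1) \<and> mono F
      \<and> (\<forall>x::real. continuous (at_left x) (\<lambda>t. F (ereal t)))
      \<and> F 0 = 0 \<and> F PInfty = 1}"

definition D_plus :: "dfun set" where
  "D_plus = {F \<in> Delta_plus. ((\<lambda>t::real. F (ereal t)) \<longlongrightarrow> 1) at_top}"

definition eps0 :: dfun where
  "eps0 = (\<lambda>x. if x \<le> 0 then 0 else 1)"

definition epsinf :: dfun where
  "epsinf = (\<lambda>x. if x = PInfty then 1 else 0)"

definition triangle_function :: "(dfun \<Rightarrow> dfun \<Rightarrow> dfun) \<Rightarrow> bool" where
  "triangle_function T \<longleftrightarrow>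
     (\<forall>F\<in>Delta_plus. \<forall>G\<in>Delta_plus. T F G \<in> Delta_plus)
   \<and> (\<forall>F\<in>Delta_plus. \<forall>G\<in>Delta_plus. \<forall>H\<in>Delta_plus. T (T F G) H = T F (T G H))
   \<and> (\<forall>F\<in>Delta_plus. \<forall>G\<in>Delta_plus. T F G = T G F)
   \<and> (\<forall>F\<in>Delta_plus. \<forall>G\<in>Delta_plus. \<forall>H\<in>Delta_plus. F \<le> G \<longrightarrow> T F H \<le> T G H)
   \<and> (\<forall>F\<in>Delta_plus. T F eps0 = F)"

definition archimedean_tf :: "(dfun \<Rightarrow> dfun \<Rightarrow> dfun) \<Rightarrow> bool" where
  "archimedean_tf T \<longleftrightarrow> (\<forall>F\<in>Delta_plus. T F F = F \<longrightarrow> F = eps0 \<or> F = epsinf)"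

text \<open>Weak convergence in Delta_plus (equivalent to convergence in the modified
  Levy / Sibley metric d_S): convergence at every continuity point in (0,+inf).\<close>
definition weak_conv :: "(nat \<Rightarrow> dfun) \<Rightarrow> dfun \<Rightarrow> bool" where
  "weak_conv Fs F \<longleftrightarrow> (\<forall>x::real. 0 < x \<and> isCont (\<lambda>t. F (ereal t)) x
       \<longrightarrow> (\<lambda>n. Fs n (ereal x)) \<longlonglongrightarrow> F (ereal x))"

definition continuous_tf :: "(dfun \<Rightarrow> dfun \<Rightarrow> dfun) \<Rightarrow> bool" where
  "continuous_tf T \<longleftrightarrow> (\<forall>Fs Gs F G. (\<forall>n. Fs n \<in> Delta_plus \<and> Gs n \<in> Delta_plus)
      \<and> F \<in> Delta_plus \<and> G \<in> Delta_plus \<and> weak_conv Fs F \<and> weak_conv Gs G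
      \<longrightarrow> weak_conv (\<lambda>n. T (Fs n) (Gs n)) (T F G))"

definition pn_space :: "('v::real_vector \<Rightarrow> dfun) \<Rightarrow> (dfun \<Rightarrow> dfun \<Rightarrow> dfun)
    \<Rightarrow> (dfun \<Rightarrow> dfun \<Rightarrow> dfun) \<Rightarrow> bool" where
  "pn_space \<nu> T Ts \<longleftrightarrow>
     triangle_function T \<and> triangle_function Ts \<and> continuous_tf T \<and> continuous_tf Ts
   \<and> (\<forall>F\<in>Delta_plus. \<forall>G\<in>Delta_plus. T F G \<le> Ts F G)
   \<and> (\<forall>p. \<nu> p \<in> Delta_plus)
   \<and> (\<forall>p. \<nu> p = eps0 \<longleftrightarrow> p = 0)
   \<and> (\<forall>p. \<nu> (- p) = \<nu> p)
   \<and> (\<forall>p q. \<nu> (p + q) \<ge> T (\<nu> p) (\<nu> q))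
   \<and> (\<forall>p. \<forall>c::real. 0 \<le> c \<and> c \<le> 1 \<longrightarrow> \<nu> p \<le> Ts (\<nu> (c *\<^sub>R p)) (\<nu> ((1 - c) *\<^sub>R p)))"

definition strong_nbhd :: "('v::real_vector \<Rightarrow> dfun) \<Rightarrow> 'v \<Rightarrow> real \<Rightarrow> 'v set" where
  "strong_nbhd \<nu> p l = {q. \<nu> (p - q) (ereal l) > 1 - l}"

definition strong_open :: "('v::real_vector \<Rightarrow> dfun) \<Rightarrow> 'v set \<Rightarrow> bool" where
  "strong_open \<nu> U \<longleftrightarrow> (\<forall>p\<in>U. \<exists>l>0. strong_nbhd \<nu> p l \<subseteq> U)"

definition strong_closed :: "('v::real_vector \<Rightarrow> dfun) \<Rightarrow> 'v set \<Rightarrow> bool" where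
  "strong_closed \<nu> A \<longleftrightarrow> strong_open \<nu> (- A)"

definition strong_conv :: "('v::real_vector \<Rightarrow> dfun) \<Rightarrow> (nat \<Rightarrow> 'v) \<Rightarrow> 'v \<Rightarrow> bool" where
  "strong_conv \<nu> xs p \<longleftrightarrow> (\<forall>l>0. eventually (\<lambda>m. xs m \<in> strong_nbhd \<nu> p l) sequentially)"

text \<open>Probabilistic radius R_A; l^- is the left limit. For negative arguments
  (where the paper leaves it implicit) it is 0, as for every element of Delta_plus.\<close>
definition prob_radius :: "('v::real_vector \<Rightarrow> dfun) \<Rightarrow> 'v set \<Rightarrow> dfun" where
  "prob_radius \<nu> A x = (case x of
       ereal r \<Rightarrow> (if r < 0 then 0 else Lim (at_left r) (\<lambda>t. INF q\<in>A. \<nu> q (ereal t)))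
     | PInfty \<Rightarrow> 1
     | MInfty \<Rightarrow> 0)"

definition D_bounded :: "('v::real_vector \<Rightarrow> dfun) \<Rightarrow> 'v set \<Rightarrow> bool" where
  "D_bounded \<nu> A \<longleftrightarrow> prob_radius \<nu> A \<in> D_plus"

definition D_compact :: "('v::real_vector \<Rightarrow> dfun) \<Rightarrow> 'v set \<Rightarrow> bool" where
  "D_compact \<nu> A \<longleftrightarrow> (\<forall>xs. (\<forall>n. xs n \<in> A) \<longrightarrow>
      (\<exists>(r::nat \<Rightarrow> nat) p. strict_mono r \<and> p \<in> A \<and> strong_conv \<nu> (xs \<circ> r) p))"

definition LG_property :: "(real \<Rightarrow> dfun) \<Rightarrow> bool" where
  "LG_property \<nu>' \<longleftrightarrow> (\<forall>x::real>0. ((\<lambda>r. \<nu>' r (ereal x)) \<longlongrightarrow> 0) at_top)"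

end

theory Submission
  imports Defs
begin

lemma dp_props:
  assumes "F \<in> Delta_plus"
  shows "0 \<le> F x" "F x \<le> 1" "mono F" "F 0 = 0" "F PInfty = 1"
    "continuous (at_left (r::real)) (\<lambda>t. F (ereal t))"
  using assms unfolding Delta_plus_def by auto

lemma dp_nonpos: assumes "F \<in> Delta_plus" "x \<le> 0" shows "F x = 0"
proof -
  have "F x \<le> F 0" using dp_props(3)[OF assms(1)] assms(2) by (simp add: mono_def)
  then show ?thesis using dp_props(1,4)[OF assms(1)] by (metis antisym)
qed

lemma dp_MInf: assumes "F \<in> Delta_plus" shows "F MInfty = 0"
  using dp_nonpos[OF assms] by simp

lemma eps0_in: "eps0 \<in> Delta_plus"
proof -
  have "continuous (at_left r) (\<lambda>t. eps0 (ereal t))" for r :: real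
  proof (cases "r \<le> 0")
    case True
    have "eventually (\<lambda>t. eps0 (ereal t) = eps0 (ereal r)) (at_left r)"
      using True by (auto simp: eventually_at_left_real eps0_def intro!: eventually_at_leftI[of "r-1"])
    then show ?thesis unfolding continuous_within
      by (rule tendsto_eventually)
  next
    case False
    have "eventually (\<lambda>t. eps0 (ereal t) = eps0 (ereal r)) (at_left r)"
      using False by (auto simp: eps0_def intro!: eventually_at_leftI[of "0"])
    then show ?thesis unfolding continuous_within
      by (rule tendsto_eventually)
  qed
  moreover have "mono eps0" by (auto simp: mono_def eps0_def)
  ultimately show ?thesis unfolding Delta_plus_def by (auto simp: eps0_def)
qed

lemma le_eps0: assumes "F \<in> Delta_plus" shows "F \<le> eps0"
proof (rule le_funI)
  fix x show "F x \<le> eps0 x"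
    using dp_nonpos[OF assms, of x] dp_props(2)[OF assms, of x] by (auto simp: eps0_def)
qed

lemma tf_mono1: "triangle_function T \<Longrightarrow> F \<in> Delta_plus \<Longrightarrow> G \<in> Delta_plus \<Longrightarrow> H \<in> Delta_plus
  \<Longrightarrow> F \<le> G \<Longrightarrow> T F H \<le> T G H"
  unfolding triangle_function_def by blast

lemma tf_comm: "triangle_function T \<Longrightarrow> F \<in> Delta_plus \<Longrightarrow> G \<in> Delta_plus \<Longrightarrow> T F G = T G F"
  unfolding triangle_function_def by blast

lemma tf_in: "triangle_function T \<Longrightarrow> F \<in> Delta_plus \<Longrightarrow> G \<in> Delta_plus \<Longrightarrow> T F G \<in> Delta_plus"
  unfolding triangle_function_def by blast

lemma tf_unit: "triangle_function T \<Longrightarrow> F \<in> Delta_plus \<Longrightarrow> T F eps0 = F"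
  unfolding triangle_function_def by blast

lemma tf_mono2: "triangle_function T \<Longrightarrow> F \<in> Delta_plus \<Longrightarrow> G \<in> Delta_plus \<Longrightarrow> H \<in> Delta_plus
  \<Longrightarrow> F \<le> G \<Longrightarrow> T H F \<le> T H G"
  by (metis tf_comm tf_mono1)

lemma tf_le_left: "triangle_function T \<Longrightarrow> F \<in> Delta_plus \<Longrightarrow> G \<in> Delta_plus \<Longrightarrow> T F G \<le> F"
  by (metis tf_mono2 tf_unit le_eps0 eps0_in)

lemma tf_mono: "triangle_function T \<Longrightarrow> F \<in> Delta_plus \<Longrightarrow> G \<in> Delta_plus \<Longrightarrow>
   F' \<in> Delta_plus \<Longrightarrow> G' \<in> Delta_plus \<Longrightarrow> F \<le> F' \<Longrightarrow> G \<le> G' \<Longrightarrow> T F G \<le> T F' G'"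
  by (meson order_trans tf_mono1 tf_mono2)


definition lreg :: "(real \<Rightarrow> real) \<Rightarrow> dfun" where
  "lreg f x = (case x of ereal r \<Rightarrow> Sup (f ` {..<r}) | PInfty \<Rightarrow> 1 | MInfty \<Rightarrow> 0)"

definition good_fun :: "(real \<Rightarrow> real) \<Rightarrow> bool" where
  "good_fun f \<longleftrightarrow> mono f \<and> (\<forall>t. 0 \<le> f t \<and> f t \<le> 1) \<and> (\<forall>t\<le>0. f t = 0)"

lemma mono_left_tendsto:
  fixes f :: "real \<Rightarrow> real"
  assumes "mono f" "\<And>t. f t \<le> B"
  shows "(f \<longlongrightarrow> Sup (f ` {..<x})) (at_left x)"
proof (rule order_tendstoI)
  have bdd: "bdd_above (f ` {..<x})" using assms(2) by (auto intro!: bdd_aboveI)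
  fix a assume "a < Sup (f ` {..<x})"
  then obtain s where s: "s < x" "a < f s" using less_cSup_iff[OF _ bdd, of a] by auto
  have "eventually (\<lambda>t. t \<in> {s<..<x}) (at_left x)" using s(1) eventually_at_left_real by blast
  then show "eventually (\<lambda>t. a < f t) (at_left x)"
    by eventually_elim (use s assms(1) in \<open>auto simp: mono_def intro: less_le_trans\<close>)
next
  have bdd: "bdd_above (f ` {..<x})" using assms(2) by (auto intro!: bdd_aboveI)
  fix a assume "Sup (f ` {..<x}) < a"
  have "eventually (\<lambda>t. t < x) (at_left x)" by (simp add: eventually_at_filter)
  then show "eventually (\<lambda>t. f t < a) (at_left x)"
  proof eventually_elim
    case (elim t)
    have "f t \<le> Sup (f ` {..<x})" using elim bdd by (auto intro: cSup_upper)
    then show ?case using \<open>Sup (f ` {..<x}) < a\<close> by linarith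
  qed
qed

context
  fixes f :: "real \<Rightarrow> real"
  assumes gf: "good_fun f"
begin

lemma gf_mono: "s \<le> t \<Longrightarrow> f s \<le> f t" using gf by (auto simp: good_fun_def mono_def)
lemma gf_bdd: "bdd_above (f ` {..<x})" using gf by (auto simp: good_fun_def intro!: bdd_aboveI)
lemma gf_le1: "f t \<le> 1" "0 \<le> f t" using gf by (auto simp: good_fun_def)

lemma lreg_real: "lreg f (ereal x) = Sup (f ` {..<x})" by (simp add: lreg_def)

lemma lreg_le: "lreg f (ereal x) \<le> f x"
  unfolding lreg_real by (rule cSup_least) (auto intro: gf_mono)

lemma lreg_ge: "s < x \<Longrightarrow> f s \<le> lreg f (ereal x)"
  unfolding lreg_real by (rule cSup_upper) (auto intro: gf_bdd)

lemma lreg_nonpos: "x \<le> 0 \<Longrightarrow> lreg f (ereal x) = 0"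
  using lreg_le[of x] lreg_ge[of "x-1" x] gf by (auto simp: good_fun_def)

lemma lreg_mono_real: "s \<le> t \<Longrightarrow> lreg f (ereal s) \<le> lreg f (ereal t)"
  unfolding lreg_real by (rule cSup_subset_mono) (auto intro: gf_bdd)

lemma lreg_bounds: "0 \<le> lreg f x \<and> lreg f x \<le> 1"
proof (cases x)
  case (real r)
  have "lreg f (ereal r) \<le> 1" using lreg_le[of r] gf_le1[of r] by linarith
  moreover have "0 \<le> lreg f (ereal r)" using lreg_ge[of "r-1" r] gf_le1[of "r-1"] by linarith
  ultimately show ?thesis using real by simp
qed (auto simp: lreg_def)

lemma lreg_leftcont: "continuous (at_left x) (\<lambda>t. lreg f (ereal t))"
  unfolding continuous_within
proof (rule order_tendstoI)
  fix a assume "a < lreg f (ereal x)"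
  then obtain s where s: "s < x" "a < f s" using less_cSup_iff[OF _ gf_bdd[of x], of a] by (auto simp: lreg_real)
  have "eventually (\<lambda>t. t \<in> {s<..<x}) (at_left x)" using s(1) eventually_at_left_real by blast
  then show "eventually (\<lambda>t. a < lreg f (ereal t)) (at_left x)"
  proof eventually_elim
    case (elim t)
    then have "f s \<le> lreg f (ereal t)" by (intro lreg_ge) auto
    then show ?case using s by linarith
  qed
next
  fix a assume "lreg f (ereal x) < a"
  have "eventually (\<lambda>t. t < x) (at_left x)" by (simp add: eventually_at_filter)
  then show "eventually (\<lambda>t. lreg f (ereal t) < a) (at_left x)"
  proof eventually_elim
    case (elim t)
    then have "lreg f (ereal t) \<le> lreg f (ereal x)" by (intro lreg_mono_real) auto
    then show ?case using \<open>lreg f (ereal x) < a\<close> by linarith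
  qed
qed

lemma lreg_mono: "mono (lreg f)"
proof (rule monoI)
  fix x y :: ereal assume "x \<le> y"
  then show "lreg f x \<le> lreg f y"
    using lreg_bounds[of x] lreg_bounds[of y] lreg_mono_real
    by (cases x; cases y) (auto simp: lreg_def)
qed

lemma lreg_in: "lreg f \<in> Delta_plus"
  unfolding Delta_plus_def using lreg_bounds lreg_mono lreg_leftcont lreg_nonpos[of 0]
  by (auto simp: lreg_def zero_ereal_def)

lemma lreg_cont_eq:
  assumes "isCont (\<lambda>t. lreg f (ereal t)) x"
  shows "lreg f (ereal x) = f x"
proof -
  have "((\<lambda>t. lreg f (ereal t)) \<longlongrightarrow> lreg f (ereal x)) (at_right x)"
    using assms by (simp add: isCont_def filterlim_at_split)
  moreover have "eventually (\<lambda>t. f x \<le> lreg f (ereal t)) (at_right x)"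
    using eventually_at_right_less[of x] by eventually_elim (rule lreg_ge)
  ultimately have "f x \<le> lreg f (ereal x)"
    by (rule tendsto_lowerbound) simp
  then show ?thesis using lreg_le[of x] by simp
qed

lemma lreg_below:
  assumes "F \<in> Delta_plus" "\<And>t. F (ereal t) \<le> f t"
  shows "F \<le> lreg f"
proof (rule le_funI)
  fix x show "F x \<le> lreg f x"
  proof (cases x)
    case (real r)
    have "((\<lambda>t. F (ereal t)) \<longlongrightarrow> F (ereal r)) (at_left r)"
      using dp_props(6)[OF assms(1), of r] by (simp add: continuous_within)
    moreover have "eventually (\<lambda>t. F (ereal t) \<le> lreg f (ereal r)) (at_left r)"
    proof -
      have "eventually (\<lambda>t. t < r) (at_left r)" by (simp add: eventually_at_filter)
      then show ?thesis
      proof eventually_elim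
        case (elim t)
        then show ?case using assms(2)[of t] lreg_ge[of t r] by linarith
      qed
    qed
    ultimately have "F (ereal r) \<le> lreg f (ereal r)"
      by (rule tendsto_upperbound) simp
    then show ?thesis using real by simp
  next
    case PInf then show ?thesis using dp_props(2)[OF assms(1)] by (simp add: lreg_def)
  next
    case MInf then show ?thesis using dp_MInf[OF assms(1)] by (simp add: lreg_def)
  qed
qed

end

lemma countable_discont_lreg:
  assumes "good_fun f" shows "countable {a. \<not> isCont (\<lambda>t. lreg f (ereal t)) a}"
  by (rule mono_ctble_discont) (auto simp: mono_def intro: lreg_mono_real[OF assms])

lemma countable_discont_dp:
  assumes "F \<in> Delta_plus" shows "countable {a. \<not> isCont (\<lambda>t. F (ereal t)) a}"
  by (rule mono_ctble_discont) (use dp_props(3)[OF assms] in \<open>auto simp: mono_def\<close>)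

lemma avoid_countable:
  fixes S :: "real set" assumes "countable S" "a < b"
  obtains t where "a < t" "t < b" "t \<notin> S"
proof -
  have "uncountable {a<..<b}" using assms(2) uncountable_open_interval by blast
  then have "\<not> {a<..<b} \<subseteq> S" using assms(1) countable_subset by blast
  then obtain t where "t \<in> {a<..<b}" "t \<notin> S" by blast
  then show ?thesis using that by auto
qed

lemma dense_le:
  fixes S :: "real set"
  assumes "countable S" "F \<in> Delta_plus" "G \<in> Delta_plus"
    "\<And>t. 0 < t \<Longrightarrow> t \<notin> S \<Longrightarrow> F (ereal t) \<le> G (ereal t)"
  shows "F \<le> G"
proof (rule le_funI)
  fix x show "F x \<le> G x"
  proof (cases x)
    case (real r)
    show ?thesis
    proof (cases "r \<le> 0")
      case True then show ?thesis using real dp_nonpos[OF assms(2), of x] dp_props(1)[OF assms(3)] by simp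
    next
      case False
      show ?thesis
      proof (rule ccontr)
        assume "\<not> F x \<le> G x"
        then have lt: "0 < F (ereal r) - G (ereal r)" using real by simp
        have "((\<lambda>t. F (ereal t) - G (ereal t)) \<longlongrightarrow> F (ereal r) - G (ereal r)) (at_left r)"
          using dp_props(6)[OF assms(2), of r] dp_props(6)[OF assms(3), of r]
          by (intro tendsto_diff) (auto simp: continuous_within)
        from order_tendstoD(1)[OF this lt]
        obtain b where b: "b < r" "\<And>t. b < t \<Longrightarrow> t < r \<Longrightarrow> 0 < F (ereal t) - G (ereal t)"
          unfolding eventually_at_left_field by blast
        obtain t where t: "max b 0 < t" "t < r" "t \<notin> S"
          using avoid_countable[OF assms(1), of "max b 0" r] b False by auto
        show False using b(2)[of t] assms(4)[of t] t by simp
      qed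
    qed
  next
    case PInf then show ?thesis using dp_props(5)[OF assms(2)] dp_props(5)[OF assms(3)] by simp
  next
    case MInf then show ?thesis using dp_MInf[OF assms(2)] dp_MInf[OF assms(3)] by simp
  qed
qed


definition sconv :: "('v::real_vector \<Rightarrow> dfun) \<Rightarrow> (nat \<Rightarrow> 'v) \<Rightarrow> 'v \<Rightarrow> bool" where
  "sconv \<nu> xs p \<longleftrightarrow> (\<forall>x>0. (\<lambda>n. \<nu> (xs n - p) (ereal x)) \<longlonglongrightarrow> 1)"

lemma squeeze1:
  fixes f g :: "nat \<Rightarrow> real"
  assumes "g \<longlonglongrightarrow> 1" "\<And>n. g n \<le> f n" "\<And>n. f n \<le> 1"
  shows "f \<longlonglongrightarrow> 1"
proof (rule tendsto_sandwich[where f=g and g=f and h="\<lambda>_. 1"])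
  show "eventually (\<lambda>n. g n \<le> f n) sequentially" using assms(2) by (intro always_eventually allI)
  show "eventually (\<lambda>n. f n \<le> 1) sequentially" using assms(3) by (intro always_eventually allI)
qed (use assms(1) in simp_all)

lemma eps0_isCont: "0 < x \<Longrightarrow> isCont (\<lambda>t. eps0 (ereal t)) x"
proof -
  assume x: "0 < x"
  have "eventually (\<lambda>t. eps0 (ereal t) = eps0 (ereal x)) (nhds x)"
    using eventually_nhds_in_open[of "{0<..}" x] x
    by (auto elim!: eventually_mono simp: eps0_def)
  then show ?thesis unfolding isCont_def
    by (intro tendsto_eventually) (simp add: eventually_at_filter eventually_mono)
qed

lemma weak_eps0: "weak_conv Fs eps0 \<longleftrightarrow> (\<forall>x>0. (\<lambda>n. Fs n (ereal x)) \<longlonglongrightarrow> 1)"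
  unfolding weak_conv_def using eps0_isCont by (auto simp: eps0_def)

lemma weak_const: "weak_conv (\<lambda>n. F) F"
  unfolding weak_conv_def by simp

context
  fixes \<nu> :: "'v::real_vector \<Rightarrow> dfun" and T Ts
  assumes pn: "pn_space \<nu> T Ts"
begin

lemma tfT: "triangle_function T" using pn by (simp add: pn_space_def)
lemma tfTs: "triangle_function Ts" using pn by (simp add: pn_space_def)
lemma contT: "continuous_tf T" using pn by (simp add: pn_space_def)
lemma contTs: "continuous_tf Ts" using pn by (simp add: pn_space_def)
lemma nu_in: "\<nu> p \<in> Delta_plus" using pn by (simp add: pn_space_def)
lemma nu_eps0_iff: "\<nu> p = eps0 \<longleftrightarrow> p = 0" using pn by (simp add: pn_space_def)
lemma nu_minus: "\<nu> (- p) = \<nu> p" using pn by (simp add: pn_space_def)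
lemma nu_diff_sym: "\<nu> (p - q) = \<nu> (q - p)" by (metis minus_diff_eq nu_minus)
lemma nu_tri: "T (\<nu> p) (\<nu> q) \<le> \<nu> (p + q)" using pn by (simp add: pn_space_def)
lemma nu_N4: "0 \<le> c \<Longrightarrow> c \<le> 1 \<Longrightarrow> \<nu> p \<le> Ts (\<nu> (c *\<^sub>R p)) (\<nu> ((1 - c) *\<^sub>R p))"
  using pn by (simp add: pn_space_def)
lemma nu_le1: "\<nu> p x \<le> 1" by (rule dp_props(2)[OF nu_in])
lemma nu_ge0: "0 \<le> \<nu> p x" by (rule dp_props(1)[OF nu_in])
lemma nu_mono: "x \<le> y \<Longrightarrow> \<nu> p x \<le> \<nu> p y" using dp_props(3)[OF nu_in] by (auto simp: mono_def)

lemma ray: assumes "0 \<le> s" "s \<le> t" shows "\<nu> (t *\<^sub>R p) \<le> \<nu> (s *\<^sub>R p)"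
proof (cases "t = 0")
  case True then show ?thesis using assms by simp
next
  case False
  then have t: "0 < t" using assms by simp
  define c where "c = s / t"
  have c: "0 \<le> c" "c \<le> 1" using assms t by (auto simp: c_def)
  have "\<nu> (t *\<^sub>R p) \<le> Ts (\<nu> (c *\<^sub>R (t *\<^sub>R p))) (\<nu> ((1 - c) *\<^sub>R (t *\<^sub>R p)))"
    by (rule nu_N4[OF c])
  also have "\<dots> \<le> \<nu> (c *\<^sub>R (t *\<^sub>R p))" by (rule tf_le_left[OF tfTs nu_in nu_in])
  also have "c *\<^sub>R (t *\<^sub>R p) = s *\<^sub>R p" using t by (simp add: c_def)
  finally show ?thesis .
qed

lemma nu_abs_scale: "\<nu> (s *\<^sub>R p) = \<nu> (\<bar>s\<bar> *\<^sub>R p)"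
proof (cases "s \<ge> 0")
  case False
  then have "\<bar>s\<bar> *\<^sub>R p = - (s *\<^sub>R p)" by simp
  then show ?thesis by (simp only: nu_minus)
qed simp

lemma ray_abs: "\<bar>s\<bar> \<le> \<bar>t\<bar> \<Longrightarrow> \<nu> (t *\<^sub>R p) \<le> \<nu> (s *\<^sub>R p)"
  using ray[of "\<bar>s\<bar>" "\<bar>t\<bar>" p] nu_abs_scale[of s p] nu_abs_scale[of t p] by simp

lemma half: "\<nu> (2 *\<^sub>R p) \<le> Ts (\<nu> p) (\<nu> p)"
  using nu_N4[of "1/2" "2 *\<^sub>R p"] by simp

lemma sconv_strong: "sconv \<nu> xs p \<longleftrightarrow> strong_conv \<nu> xs p"
proof
  assume s: "sconv \<nu> xs p"
  show "strong_conv \<nu> xs p" unfolding strong_conv_def strong_nbhd_def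
  proof (intro allI impI)
    fix l :: real assume "0 < l"
    then have "(\<lambda>n. \<nu> (xs n - p) (ereal l)) \<longlonglongrightarrow> 1" using s by (simp add: sconv_def)
    from order_tendstoD(1)[OF this, of "1 - l"] \<open>0 < l\<close>
    have "eventually (\<lambda>m. 1 - l < \<nu> (xs m - p) (ereal l)) sequentially" by simp
    then show "eventually (\<lambda>m. xs m \<in> {q. 1 - l < \<nu> (p - q) (ereal l)}) sequentially"
      by eventually_elim (metis mem_Collect_eq nu_diff_sym)
  qed
next
  assume s: "strong_conv \<nu> xs p"
  show "sconv \<nu> xs p" unfolding sconv_def
  proof (intro allI impI)
    fix x :: real assume "0 < x"
    show "(\<lambda>n. \<nu> (xs n - p) (ereal x)) \<longlonglongrightarrow> 1"
    proof (rule order_tendstoI)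
      fix a :: real assume "a < 1"
      define l where "l = min x (1 - a)"
      have l: "0 < l" "l \<le> x" "1 - l \<ge> a" using \<open>a < 1\<close> \<open>0 < x\<close> by (auto simp: l_def)
      have "eventually (\<lambda>m. xs m \<in> strong_nbhd \<nu> p l) sequentially" using s l by (simp add: strong_conv_def)
      then show "eventually (\<lambda>n. a < \<nu> (xs n - p) (ereal x)) sequentially"
      proof eventually_elim
        case (elim n)
        then have "1 - l < \<nu> (p - xs n) (ereal l)" by (simp add: strong_nbhd_def)
        then have "1 - l < \<nu> (xs n - p) (ereal l)" by (metis nu_diff_sym)
        moreover have "\<nu> (xs n - p) (ereal l) \<le> \<nu> (xs n - p) (ereal x)" using l by (intro nu_mono) simp
        ultimately show ?case using l by linarith
      qed
    next
      fix a :: real assume "1 < a"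
      then show "eventually (\<lambda>n. \<nu> (xs n - p) (ereal x) < a) sequentially"
        using nu_le1 by (intro always_eventually allI) (meson le_less_trans)
    qed
  qed
qed

lemma sconv_weak: "sconv \<nu> xs p \<longleftrightarrow> weak_conv (\<lambda>n. \<nu> (xs n - p)) eps0"
  by (simp add: sconv_def weak_eps0)

lemma T_conv_eps0:
  assumes "sconv \<nu> a p" "sconv \<nu> b q"
  shows "weak_conv (\<lambda>n. T (\<nu> (a n - p)) (\<nu> (b n - q))) eps0"
proof -
  have w1: "weak_conv (\<lambda>n. \<nu> (a n - p)) eps0" using assms(1) by (simp only: sconv_weak)
  have w2: "weak_conv (\<lambda>n. \<nu> (b n - q)) eps0" using assms(2) by (simp only: sconv_weak)
  have h: "(\<forall>n. \<nu> (a n - p) \<in> Delta_plus \<and> \<nu> (b n - q) \<in> Delta_plus)" using nu_in by blast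
  have "weak_conv (\<lambda>n. T (\<nu> (a n - p)) (\<nu> (b n - q))) (T eps0 eps0)"
    using contT[unfolded continuous_tf_def, rule_format, OF conjI[OF h conjI[OF eps0_in conjI[OF eps0_in conjI[OF w1 w2]]]]] .
  then show ?thesis using tf_unit[OF tfT eps0_in] by simp
qed

lemma sconv_add:
  assumes "sconv \<nu> a p" "sconv \<nu> b q"
  shows "sconv \<nu> (\<lambda>n. a n + b n) (p + q)"
  unfolding sconv_def
proof (intro allI impI)
  fix x :: real assume x: "0 < x"
  have "(\<lambda>n. T (\<nu> (a n - p)) (\<nu> (b n - q)) (ereal x)) \<longlonglongrightarrow> 1"
    using T_conv_eps0[OF assms] x by (simp add: weak_eps0)
  moreover have "T (\<nu> (a n - p)) (\<nu> (b n - q)) (ereal x) \<le> \<nu> (a n + b n - (p + q)) (ereal x)" for n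
    using nu_tri[of "a n - p" "b n - q"] by (auto simp: le_fun_def algebra_simps)
  ultimately show "(\<lambda>n. \<nu> (a n + b n - (p + q)) (ereal x)) \<longlonglongrightarrow> 1"
    by (rule squeeze1) (rule nu_le1)
qed

lemma sconv_subseq: "sconv \<nu> xs p \<Longrightarrow> strict_mono r \<Longrightarrow> sconv \<nu> (xs \<circ> r) p"
  unfolding sconv_def using LIMSEQ_subseq_LIMSEQ by (fastforce simp: o_def)

lemma sconv_const: "sconv \<nu> (\<lambda>n. p) p"
  using nu_eps0_iff[of 0] by (simp add: sconv_def eps0_def)

lemma eq_eps0_if:
  assumes "F \<in> Delta_plus" "\<And>x. 0 < x \<Longrightarrow> 1 \<le> F (ereal x)"
  shows "F = eps0"
proof (rule antisym[OF le_eps0[OF assms(1)]], rule le_funI)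
  fix x show "eps0 x \<le> F x"
  proof (cases x)
    case (real r) then show ?thesis using assms(2)[of r] dp_props(1)[OF assms(1)] by (auto simp: eps0_def)
  next
    case PInf then show ?thesis using dp_props(5)[OF assms(1)] by (simp add: eps0_def)
  next
    case MInf then show ?thesis using dp_props(1)[OF assms(1), of x] by (simp add: eps0_def)
  qed
qed

lemma sconv_unique:
  assumes "sconv \<nu> xs p" "sconv \<nu> xs q"
  shows "p = q"
proof -
  have e: "\<nu> (p - xs n - 0) = \<nu> (xs n - p)" for n using nu_diff_sym[of p "xs n"] by simp
  have 1: "sconv \<nu> (\<lambda>n. p - xs n) 0" using assms(1)
    unfolding sconv_def e .
  have "sconv \<nu> (\<lambda>n. (p - xs n) + xs n) (0 + q)" by (rule sconv_add[OF 1 assms(2)])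
  then have c: "sconv \<nu> (\<lambda>n. p) q" by simp
  have "\<nu> (p - q) = eps0"
  proof (rule eq_eps0_if[OF nu_in])
    fix x :: real assume "0 < x"
    then have "(\<lambda>n. \<nu> (p - q) (ereal x)) \<longlonglongrightarrow> 1" using c by (simp add: sconv_def)
    then have "\<nu> (p - q) (ereal x) = 1" using LIMSEQ_const_iff by blast
    then show "1 \<le> \<nu> (p - q) (ereal x)" by simp
  qed
  then show ?thesis using nu_eps0_iff by simp
qed

end

lemma not_epsinf_pos:
  assumes "F \<in> Delta_plus" "F \<noteq> epsinf"
  obtains t where "0 < F (ereal t)"
proof -
  have "\<exists>t. F (ereal t) \<noteq> 0"
  proof (rule ccontr)
    assume "\<not> (\<exists>t. F (ereal t) \<noteq> 0)"
    then have "F = epsinf"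
    proof (intro ext)
      fix x assume h: "\<not> (\<exists>t. F (ereal t) \<noteq> 0)"
      show "F x = epsinf x"
        by (cases x) (use h dp_props(5)[OF assms(1)] dp_MInf[OF assms(1)] in \<open>auto simp: epsinf_def\<close>)
    qed
    then show False using assms(2) by simp
  qed
  then obtain t where "F (ereal t) \<noteq> 0" by blast
  moreover have "0 \<le> F (ereal t)" by (rule dp_props(1)[OF assms(1)])
  ultimately have "0 < F (ereal t)" by linarith
  then show ?thesis by (rule that)
qed

lemma le_on_reals:
  assumes "F \<in> Delta_plus" "G \<in> Delta_plus" "\<And>t. F (ereal t) \<le> G (ereal t)"
  shows "F \<le> G"
proof (rule le_funI)
  fix x show "F x \<le> G x"
    by (cases x) (use assms dp_props(5)[OF assms(1)] dp_props(5)[OF assms(2)] dp_MInf[OF assms(1)] dp_MInf[OF assms(2)] in auto)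
qed

context
  fixes \<nu> :: "'v::real_vector \<Rightarrow> dfun" and T Ts
  assumes pn: "pn_space \<nu> T Ts"
    and arch: "archimedean_tf Ts"
    and not_inf: "\<forall>p. \<nu> p \<noteq> epsinf"
begin

lemma small_scale_sup:
  assumes "0 < x" "a < 1"
  shows "\<exists>j. a < \<nu> (((1/2)^j) *\<^sub>R v) (ereal x)"
proof -
  define P where "P j = \<nu> (((1/2::real)^j) *\<^sub>R v)" for j
  define G where "G t = (SUP j. P j (ereal t))" for t
  have Pin: "P j \<in> Delta_plus" for j unfolding P_def by (rule nu_in[OF pn])
  have bdd: "bdd_above (range (\<lambda>j. P j (ereal t)))" for t
    using dp_props(2)[OF Pin] by (auto intro!: bdd_aboveI)
  have PG: "P j (ereal t) \<le> G t" for j t unfolding G_def by (rule cSUP_upper[OF _ bdd]) simp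
  have Gle: "G t \<le> B" if "\<And>j. P j (ereal t) \<le> B" for t B
    unfolding G_def by (rule cSUP_least) (use that in auto)
  have gf: "good_fun G" unfolding good_fun_def
  proof (intro conjI allI impI)
    show "mono G"
    proof (rule monoI)
      fix s t :: real assume "s \<le> t"
      show "G s \<le> G t"
      proof (rule Gle)
        fix j have "P j (ereal s) \<le> P j (ereal t)" using dp_props(3)[OF Pin] \<open>s \<le> t\<close> by (auto simp: mono_def)
        then show "P j (ereal s) \<le> G t" using PG[of j t] by linarith
      qed
    qed
    fix t
    show "0 \<le> G t" using PG[of 0 t] dp_props(1)[OF Pin, of 0 "ereal t"] by linarith
    show "G t \<le> 1" by (rule Gle) (rule dp_props(2)[OF Pin])
  next
    fix t :: real assume "t \<le> 0"
    then have "G t \<le> 0" by (intro Gle) (simp add: dp_nonpos[OF Pin])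
    then show "G t = 0" using PG[of 0 t] dp_props(1)[OF Pin, of 0 "ereal t"] by linarith
  qed
  define L where "L = lreg G"
  have Lin: "L \<in> Delta_plus" unfolding L_def by (rule lreg_in[OF gf])
  have PL: "P j \<le> L" for j unfolding L_def by (rule lreg_below[OF gf Pin]) (rule PG)
  have TsLin: "Ts L L \<in> Delta_plus" by (rule tf_in[OF tfTs[OF pn] Lin Lin])
  have "P j \<le> Ts L L" for j
  proof -
    have "P j = \<nu> (2 *\<^sub>R (((1/2::real)^(Suc j)) *\<^sub>R v))" unfolding P_def by simp
    also have "\<dots> \<le> Ts (P (Suc j)) (P (Suc j))" unfolding P_def by (rule half[OF pn])
    also have "\<dots> \<le> Ts L L" by (rule tf_mono[OF tfTs[OF pn] Pin Pin Lin Lin PL PL])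
    finally show ?thesis .
  qed
  then have "G t \<le> Ts L L (ereal t)" for t by (intro Gle) (simp add: le_fun_def)
  then have "L (ereal t) \<le> Ts L L (ereal t)" for t
    using lreg_le[OF gf, of t] unfolding L_def by (meson order_trans)
  then have "L \<le> Ts L L" by (rule le_on_reals[OF Lin TsLin])
  then have "Ts L L = L" using tf_le_left[OF tfTs[OF pn] Lin Lin] by simp
  then have "L = eps0 \<or> L = epsinf" using arch Lin by (simp add: archimedean_tf_def)
  moreover have "L \<noteq> epsinf"
  proof
    assume "L = epsinf"
    obtain t where "0 < P 0 (ereal t)" using not_epsinf_pos[OF Pin] not_inf unfolding P_def by blast
    moreover have "P 0 (ereal t) \<le> L (ereal t)" using PL[of 0] by (simp add: le_fun_def)
    ultimately show False using \<open>L = epsinf\<close> by (simp add: epsinf_def)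
  qed
  ultimately have "L = eps0" by simp
  then have "1 \<le> G x" using lreg_le[OF gf, of x] assms(1) unfolding L_def by (simp add: eps0_def)
  then have "a < G x" using assms(2) by simp
  then obtain j where "a < P j (ereal x)" unfolding G_def using less_cSUP_iff[OF _ bdd] by auto
  then show ?thesis unfolding P_def by blast
qed

lemma small_scale:
  assumes "t \<longlonglongrightarrow> 0"
  shows "sconv \<nu> (\<lambda>n. t n *\<^sub>R v) 0"
  unfolding sconv_def
proof (intro allI impI)
  fix x :: real assume x: "0 < x"
  show "(\<lambda>n. \<nu> (t n *\<^sub>R v - 0) (ereal x)) \<longlonglongrightarrow> 1"
  proof (rule order_tendstoI)
    fix a :: real assume "a < 1"
    then obtain j where j: "a < \<nu> (((1/2)^j) *\<^sub>R v) (ereal x)" using small_scale_sup x by blast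
    have "(0::real) < (1/2)^j" by simp
    from order_tendstoD(2)[OF tendsto_rabs_zero[OF assms] this]
    show "eventually (\<lambda>n. a < \<nu> (t n *\<^sub>R v - 0) (ereal x)) sequentially"
    proof eventually_elim
      case (elim n)
      then have "\<nu> (((1/2)^j) *\<^sub>R v) \<le> \<nu> (t n *\<^sub>R v)" by (intro ray_abs[OF pn]) simp
      then show ?case using j by (auto simp: le_fun_def intro: less_le_trans)
    qed
  next
    fix a :: real assume "1 < a"
    then show "eventually (\<lambda>n. \<nu> (t n *\<^sub>R v - 0) (ereal x) < a) sequentially"
      using nu_le1[OF pn] by (intro always_eventually allI) (meson le_less_trans)
  qed
qed

lemma sconv_scale:
  assumes "t \<longlonglongrightarrow> c"
  shows "sconv \<nu> (\<lambda>n. t n *\<^sub>R v) (c *\<^sub>R v)"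
proof -
  have "(\<lambda>n. t n - c) \<longlonglongrightarrow> 0" using assms by (simp add: LIM_zero)
  then have "sconv \<nu> (\<lambda>n. (t n - c) *\<^sub>R v) 0" by (rule small_scale)
  then show ?thesis by (simp add: sconv_def scaleR_diff_left)
qed

lemma sconv_sum:
  assumes "finite B" "\<And>b. b \<in> B \<Longrightarrow> (\<lambda>n. u n b) \<longlonglongrightarrow> d b"
  shows "sconv \<nu> (\<lambda>n. \<Sum>b\<in>B. u n b *\<^sub>R b) (\<Sum>b\<in>B. d b *\<^sub>R b)"
  using assms
proof (induction B rule: finite_induct)
  case empty then show ?case using sconv_const[OF pn, of 0] by simp
next
  case (insert b B)
  have "sconv \<nu> (\<lambda>n. u n b *\<^sub>R b + (\<Sum>b\<in>B. u n b *\<^sub>R b)) (d b *\<^sub>R b + (\<Sum>b\<in>B. d b *\<^sub>R b))"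
    by (rule sconv_add[OF pn sconv_scale]) (use insert in auto)
  then show ?case using insert by simp
qed

end

definition ginf :: "('v::real_vector \<Rightarrow> dfun) \<Rightarrow> 'v set \<Rightarrow> real \<Rightarrow> real" where
  "ginf \<nu> A t = (INF q\<in>A. \<nu> q (ereal t))"

context
  fixes \<nu> :: "'v::real_vector \<Rightarrow> dfun" and T Ts and A :: "'v set"
  assumes pn: "pn_space \<nu> T Ts" and A_ne: "A \<noteq> {}"
begin

lemma ginf_bdd: "bdd_below ((\<lambda>q. \<nu> q (ereal t)) ` A)"
  using nu_ge0[OF pn] by (auto intro!: bdd_belowI)

lemma ginf_le: "q \<in> A \<Longrightarrow> ginf \<nu> A t \<le> \<nu> q (ereal t)"
  unfolding ginf_def by (rule cINF_lower[OF ginf_bdd])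

lemma ginf_good: "good_fun (ginf \<nu> A)"
  unfolding good_fun_def
proof (intro conjI allI impI)
  obtain q0 where q0: "q0 \<in> A" using A_ne by blast
  show "mono (ginf \<nu> A)"
  proof (rule monoI)
    fix s t :: real assume "s \<le> t"
    show "ginf \<nu> A s \<le> ginf \<nu> A t" unfolding ginf_def
    proof (rule cINF_greatest[OF A_ne])
      fix q assume "q \<in> A"
      then have "ginf \<nu> A s \<le> \<nu> q (ereal s)" by (rule ginf_le)
      also have "\<dots> \<le> \<nu> q (ereal t)" using \<open>s \<le> t\<close> by (intro nu_mono[OF pn]) simp
      finally show "(INF q\<in>A. \<nu> q (ereal s)) \<le> \<nu> q (ereal t)" by (simp add: ginf_def)
    qed
  qed
  fix t
  show "0 \<le> ginf \<nu> A t" unfolding ginf_def by (rule cINF_greatest[OF A_ne]) (rule nu_ge0[OF pn])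
  show "ginf \<nu> A t \<le> 1" using ginf_le[OF q0, of t] nu_le1[OF pn, of q0 "ereal t"] by linarith
next
  fix t :: real assume "t \<le> 0"
  obtain q0 where q0: "q0 \<in> A" using A_ne by blast
  have "ginf \<nu> A t \<le> 0" using ginf_le[OF q0, of t] dp_nonpos[OF nu_in[OF pn], of "ereal t" q0] \<open>t \<le> 0\<close> by simp
  moreover have "0 \<le> ginf \<nu> A t" unfolding ginf_def by (rule cINF_greatest[OF A_ne]) (rule nu_ge0[OF pn])
  ultimately show "ginf \<nu> A t = 0" by simp
qed

lemma radius_eq: "prob_radius \<nu> A = lreg (ginf \<nu> A)"
proof (rule ext)
  fix x show "prob_radius \<nu> A x = lreg (ginf \<nu> A) x"
  proof (cases x)
    case (real r)
    show ?thesis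
    proof (cases "r < 0")
      case True then show ?thesis using real lreg_nonpos[OF ginf_good, of r] by (simp add: prob_radius_def)
    next
      case False
      have eq: "(\<lambda>t. INF q\<in>A. \<nu> q (ereal t)) = ginf \<nu> A" by (simp add: fun_eq_iff ginf_def)
      have "(ginf \<nu> A \<longlongrightarrow> Sup (ginf \<nu> A ` {..<r})) (at_left r)"
        using mono_left_tendsto[of "ginf \<nu> A" 1 r] ginf_good by (simp add: good_fun_def)
      then have L: "Lim (at_left r) (ginf \<nu> A) = Sup (ginf \<nu> A ` {..<r})"
        by (intro tendsto_Lim) simp
      have "prob_radius \<nu> A x = Lim (at_left r) (ginf \<nu> A)"
        using real False by (simp add: prob_radius_def eq)
      then show ?thesis using real L by (simp add: lreg_def)
    qed
  qed (auto simp: prob_radius_def lreg_def)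
qed

lemma radius_in: "prob_radius \<nu> A \<in> Delta_plus"
  unfolding radius_eq by (rule lreg_in[OF ginf_good])

lemma radius_le: "q \<in> A \<Longrightarrow> prob_radius \<nu> A \<le> \<nu> q"
proof (rule le_on_reals[OF radius_in nu_in[OF pn]])
  fix t assume "q \<in> A"
  have "lreg (ginf \<nu> A) (ereal t) \<le> ginf \<nu> A t" by (rule lreg_le[OF ginf_good])
  also have "\<dots> \<le> \<nu> q (ereal t)" by (rule ginf_le[OF \<open>q \<in> A\<close>])
  finally show "prob_radius \<nu> A (ereal t) \<le> \<nu> q (ereal t)" unfolding radius_eq .
qed

lemma compact_closed:
  assumes "D_compact \<nu> A"
  shows "strong_closed \<nu> A"
  unfolding strong_closed_def strong_open_def
proof (rule ballI, rule ccontr)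
  fix p assume "p \<in> - A" and nex: "\<not> (\<exists>l>0. strong_nbhd \<nu> p l \<subseteq> - A)"
  have "\<forall>n. \<exists>q. q \<in> A \<and> q \<in> strong_nbhd \<nu> p (1 / (Suc n))"
  proof
    fix n
    have "\<not> strong_nbhd \<nu> p (1 / (Suc n)) \<subseteq> - A" using nex by (metis of_nat_0_less_iff zero_less_Suc zero_less_divide_1_iff)
    then show "\<exists>q. q \<in> A \<and> q \<in> strong_nbhd \<nu> p (1 / (Suc n))" by blast
  qed
  then obtain q where qA: "\<And>n. q n \<in> A" and qN: "\<And>n. q n \<in> strong_nbhd \<nu> p (1 / (Suc n))" by metis
  have "strong_conv \<nu> q p" unfolding strong_conv_def
  proof (intro allI impI)
    fix l :: real assume "0 < l"
    obtain N :: nat where N: "1 / l < N" using reals_Archimedean2 by blast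
    show "eventually (\<lambda>m. q m \<in> strong_nbhd \<nu> p l) sequentially"
    proof (rule eventually_sequentiallyI[of N])
      fix m assume "N \<le> m"
      have "1 / l < Suc m" using N \<open>N \<le> m\<close> by linarith
      then have le: "1 / real (Suc m) \<le> l" using \<open>0 < l\<close> by (simp add: field_simps)
      have "1 - 1 / real (Suc m) < \<nu> (p - q m) (ereal (1 / real (Suc m)))"
        using qN[of m] by (simp add: strong_nbhd_def)
      also have "\<dots> \<le> \<nu> (p - q m) (ereal l)" using le by (intro nu_mono[OF pn]) simp
      finally show "q m \<in> strong_nbhd \<nu> p l" using le by (simp add: strong_nbhd_def)
    qed
  qed
  then have s1: "sconv \<nu> q p" by (simp add: sconv_strong[OF pn])
  obtain r p' where r: "strict_mono r" "p' \<in> A" "strong_conv \<nu> (q \<circ> r) p'"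
    using assms qA unfolding D_compact_def by blast
  have "sconv \<nu> (q \<circ> r) p" by (rule sconv_subseq[OF pn s1 r(1)])
  moreover have "sconv \<nu> (q \<circ> r) p'" using r(3) by (simp add: sconv_strong[OF pn])
  ultimately have "p = p'" by (rule sconv_unique[OF pn])
  then show False using \<open>p \<in> - A\<close> r(2) by simp
qed

lemma good_point:
  assumes "F \<in> Delta_plus" "a < F (ereal x0)"
  obtains x where "0 < x" "x0 \<le> x" "isCont (\<lambda>t. F (ereal t)) x" "a < F (ereal x)"
proof -
  obtain x where x: "max x0 0 < x" "x < max x0 0 + 1" "x \<notin> {a. \<not> isCont (\<lambda>t. F (ereal t)) a}"
    using avoid_countable[OF countable_discont_dp[OF assms(1)], of "max x0 0" "max x0 0 + 1"] by auto
  have "F (ereal x0) \<le> F (ereal x)" using dp_props(3)[OF assms(1)] x(1) by (auto simp: mono_def)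
  then show ?thesis using that[of x] x assms(2) by auto
qed

lemma compact_bounded:
  assumes "D_compact \<nu> A" and nuD: "\<forall>p. \<nu> p \<in> D_plus"
  shows "D_bounded \<nu> A"
proof -
  have main: "\<exists>t. 1 - \<delta> < ginf \<nu> A t" if "0 < \<delta>" for \<delta> :: real
  proof (rule ccontr)
    assume "\<not> (\<exists>t. 1 - \<delta> < ginf \<nu> A t)"
    then have le: "ginf \<nu> A t \<le> 1 - \<delta>" for t by (simp add: not_less)
    have "\<forall>n::nat. \<exists>q\<in>A. \<nu> q (ereal (real n)) < 1 - \<delta>/2"
    proof
      fix n :: nat
      have "ginf \<nu> A n < 1 - \<delta>/2" using le[of n] \<open>0 < \<delta>\<close> by linarith
      then show "\<exists>q\<in>A. \<nu> q (ereal (real n)) < 1 - \<delta>/2"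
        unfolding ginf_def using cINF_less_iff[OF A_ne ginf_bdd] by blast
    qed
    then obtain q where qA: "\<And>n. q n \<in> A" and qs: "\<And>n. \<nu> (q n) (ereal (real n)) < 1 - \<delta>/2" by metis
    obtain r p where r: "strict_mono r" "p \<in> A" "strong_conv \<nu> (q \<circ> r) p"
      using assms(1) qA unfolding D_compact_def by blast
    have sc: "sconv \<nu> (q \<circ> r) p" using r(3) by (simp add: sconv_strong[OF pn])
    have pD: "\<nu> p \<in> D_plus" using nuD by blast
    then have "((\<lambda>t. \<nu> p (ereal t)) \<longlongrightarrow> 1) at_top" by (simp add: D_plus_def)
    from order_tendstoD(1)[OF this, of "1 - \<delta>/4"] \<open>0 < \<delta>\<close>
    obtain x0 where "1 - \<delta>/4 < \<nu> p (ereal x0)" by (auto simp: eventually_at_top_linorder)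
    then obtain x where x: "0 < x" "isCont (\<lambda>t. \<nu> p (ereal t)) x" "1 - \<delta>/4 < \<nu> p (ereal x)"
      using good_point[OF nu_in[OF pn]] by metis
    have w: "weak_conv (\<lambda>n. \<nu> ((q \<circ> r) n - p)) eps0" using sc by (simp only: sconv_weak[OF pn])
    have h: "(\<forall>n. \<nu> p \<in> Delta_plus \<and> \<nu> ((q \<circ> r) n - p) \<in> Delta_plus)" using nu_in[OF pn] by blast
    have "weak_conv (\<lambda>n. T (\<nu> p) (\<nu> ((q \<circ> r) n - p))) (T (\<nu> p) eps0)"
      using contT[OF pn, unfolded continuous_tf_def, rule_format, OF conjI[OF h conjI[OF nu_in[OF pn] conjI[OF eps0_in conjI[OF weak_const w]]]]] .
    then have "weak_conv (\<lambda>n. T (\<nu> p) (\<nu> ((q \<circ> r) n - p))) (\<nu> p)"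
      using tf_unit[OF tfT[OF pn] nu_in[OF pn]] by simp
    then have "(\<lambda>n. T (\<nu> p) (\<nu> ((q \<circ> r) n - p)) (ereal x)) \<longlonglongrightarrow> \<nu> p (ereal x)"
      using x unfolding weak_conv_def by blast
    from order_tendstoD(1)[OF this, of "1 - \<delta>/2"] x(3) \<open>0 < \<delta>\<close>
    have ev1: "eventually (\<lambda>n. 1 - \<delta>/2 < T (\<nu> p) (\<nu> ((q \<circ> r) n - p)) (ereal x)) sequentially" by simp
    obtain N :: nat where N: "x \<le> N" using real_arch_simple by blast
    have ev2: "eventually (\<lambda>n. N \<le> n) sequentially" by (rule eventually_ge_at_top)
    from ev1 ev2 have "eventually (\<lambda>n. False) sequentially"
    proof eventually_elim
      case (elim n)
      have "T (\<nu> p) (\<nu> ((q \<circ> r) n - p)) \<le> \<nu> (p + ((q \<circ> r) n - p))" by (rule nu_tri[OF pn])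
      then have "T (\<nu> p) (\<nu> ((q \<circ> r) n - p)) (ereal x) \<le> \<nu> (q (r n)) (ereal x)" by (simp add: le_fun_def)
      also have "\<dots> \<le> \<nu> (q (r n)) (ereal (real (r n)))"
        using N elim(2) seq_suble[OF r(1), of n] by (intro nu_mono[OF pn]) simp
      finally show False using qs[of "r n"] elim(1) by simp
    qed
    then show False by simp
  qed
  have "((\<lambda>t. prob_radius \<nu> A (ereal t)) \<longlongrightarrow> 1) at_top"
  proof (rule order_tendstoI)
    fix a :: real assume "a < 1"
    then obtain t where t: "1 - (1 - a) < ginf \<nu> A t" using main[of "1 - a"] by auto
    show "eventually (\<lambda>s. a < prob_radius \<nu> A (ereal s)) at_top"
    proof (rule eventually_at_top_linorderI[of "t + 1"])
      fix s assume "t + 1 \<le> s"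
      then have "ginf \<nu> A t \<le> lreg (ginf \<nu> A) (ereal s)" by (intro lreg_ge[OF ginf_good]) simp
      then show "a < prob_radius \<nu> A (ereal s)" using t by (simp add: radius_eq)
    qed
  next
    fix a :: real assume "1 < a"
    then show "eventually (\<lambda>s. prob_radius \<nu> A (ereal s) < a) at_top"
      using dp_props(2)[OF radius_in] by (intro always_eventually allI) (meson le_less_trans)
  qed
  then show ?thesis unfolding D_bounded_def D_plus_def using radius_in by simp
qed

end

context
  fixes \<nu> :: "'v::real_vector \<Rightarrow> dfun" and T Ts
  assumes pn: "pn_space \<nu> T Ts"
    and arch: "archimedean_tf Ts"
begin

lemma ray_lower_zero:
  assumes RD: "R \<in> D_plus"
    and low: "\<And>j x. 0 < x \<Longrightarrow> isCont (\<lambda>t. R (ereal t)) x \<Longrightarrow> R (ereal x) \<le> \<nu> (((2::real)^j) *\<^sub>R y) (ereal x)"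
  shows "y = 0"
proof -
  have Rin: "R \<in> Delta_plus" using RD by (simp add: D_plus_def)
  define F where "F j = \<nu> (((2::real)^j) *\<^sub>R y)" for j
  define H where "H t = (INF j. F j (ereal t))" for t
  have Fin: "F j \<in> Delta_plus" for j unfolding F_def by (rule nu_in[OF pn])
  have bdd: "bdd_below (range (\<lambda>j. F j (ereal t)))" for t
    using dp_props(1)[OF Fin] by (auto intro!: bdd_belowI)
  have HF: "H t \<le> F j (ereal t)" for j t unfolding H_def by (rule cINF_lower[OF bdd]) simp
  have Hge: "B \<le> H t" if "\<And>j. B \<le> F j (ereal t)" for t B
    unfolding H_def by (rule cINF_greatest) (use that in auto)
  have gf: "good_fun H" unfolding good_fun_def
  proof (intro conjI allI impI)
    show "mono H"
    proof (rule monoI)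
      fix s t :: real assume "s \<le> t"
      show "H s \<le> H t"
      proof (rule Hge)
        fix j have "F j (ereal s) \<le> F j (ereal t)" using dp_props(3)[OF Fin] \<open>s \<le> t\<close> by (auto simp: mono_def)
        then show "H s \<le> F j (ereal t)" using HF[of s j] by linarith
      qed
    qed
    fix t
    show "0 \<le> H t" by (rule Hge) (rule dp_props(1)[OF Fin])
    show "H t \<le> 1" using HF[of t 0] dp_props(2)[OF Fin, of 0 "ereal t"] by linarith
  next
    fix t :: real assume "t \<le> 0"
    then have "H t \<le> 0" using HF[of t 0] dp_nonpos[OF Fin, of "ereal t" 0] by simp
    moreover have "0 \<le> H t" by (rule Hge) (rule dp_props(1)[OF Fin])
    ultimately show "H t = 0" by simp
  qed
  define L where "L = lreg H"
  have Lin: "L \<in> Delta_plus" unfolding L_def by (rule lreg_in[OF gf])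
  have Fdec: "F (Suc j) (ereal t) \<le> F j (ereal t)" for j t
  proof -
    have "F (Suc j) \<le> F j" unfolding F_def by (rule ray[OF pn]) simp_all
    then show ?thesis by (simp add: le_fun_def)
  qed
  have conv: "(\<lambda>j. F j (ereal t)) \<longlonglongrightarrow> H t" for t
  proof -
    have "antimono (\<lambda>j. F j (ereal t))" using Fdec by (intro antimonoI) (rule decseqD[OF decseq_SucI[where X="\<lambda>j. F j (ereal t)"]], auto)
    then show ?thesis unfolding H_def using LIMSEQ_decseq_INF[OF bdd] by simp
  qed
  have wF: "weak_conv F L" unfolding weak_conv_def
  proof (intro allI impI)
    fix x :: real assume "0 < x \<and> isCont (\<lambda>t. L (ereal t)) x"
    then have "L (ereal x) = H x" unfolding L_def by (intro lreg_cont_eq[OF gf]) (simp add: L_def)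
    then show "(\<lambda>n. F n (ereal x)) \<longlonglongrightarrow> L (ereal x)" using conv by simp
  qed
  have wF1: "weak_conv (\<lambda>j. F (Suc j)) L"
    using wF unfolding weak_conv_def by (auto intro: LIMSEQ_Suc)
  have wT: "weak_conv (\<lambda>j. Ts (F j) (F j)) (Ts L L)"
    using contTs[OF pn, unfolded continuous_tf_def, rule_format, of F F L L] Fin Lin wF by blast
  have TLin: "Ts L L \<in> Delta_plus" by (rule tf_in[OF tfTs[OF pn] Lin Lin])
  have Fhalf: "F (Suc j) \<le> Ts (F j) (F j)" for j
  proof -
    have "F (Suc j) = \<nu> (2 *\<^sub>R (((2::real)^j) *\<^sub>R y))" unfolding F_def by simp
    also have "\<dots> \<le> Ts (F j) (F j)" unfolding F_def by (rule half[OF pn])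
    finally show ?thesis .
  qed
  define S where "S = {a. \<not> isCont (\<lambda>t. L (ereal t)) a} \<union> {a. \<not> isCont (\<lambda>t. Ts L L (ereal t)) a}"
  have cS: "countable S" unfolding S_def L_def
    using countable_discont_lreg[OF gf] countable_discont_dp[OF TLin[unfolded L_def]] by simp
  have "L \<le> Ts L L"
  proof (rule dense_le[OF cS Lin TLin])
    fix t :: real assume t: "0 < t" "t \<notin> S"
    have c1: "(\<lambda>j. F (Suc j) (ereal t)) \<longlonglongrightarrow> L (ereal t)" using wF1 t unfolding weak_conv_def S_def by blast
    have c2: "(\<lambda>j. Ts (F j) (F j) (ereal t)) \<longlonglongrightarrow> Ts L L (ereal t)" using wT t unfolding weak_conv_def S_def by blast
    have c3: "F (Suc j) (ereal t) \<le> Ts (F j) (F j) (ereal t)" for j using Fhalf[of j] by (simp add: le_fun_def)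
    show "L (ereal t) \<le> Ts L L (ereal t)" by (rule LIMSEQ_le[OF c1 c2]) (use c3 in blast)
  qed
  then have "Ts L L = L" using tf_le_left[OF tfTs[OF pn] Lin Lin] by simp
  then have "L = eps0 \<or> L = epsinf" using arch Lin by (simp add: archimedean_tf_def)
  moreover have "L \<noteq> epsinf"
  proof
    assume Linf: "L = epsinf"
    have "((\<lambda>t. R (ereal t)) \<longlongrightarrow> 1) at_top" using RD by (simp add: D_plus_def)
    from order_tendstoD(1)[OF this, of "1/2"]
    obtain x0 where x0: "1/2 < R (ereal x0)" by (auto simp: eventually_at_top_linorder)
    define S' where "S' = {a. \<not> isCont (\<lambda>t. L (ereal t)) a} \<union> {a. \<not> isCont (\<lambda>t. R (ereal t)) a}"
    have cS': "countable S'" unfolding S'_def L_def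
      using countable_discont_lreg[OF gf] countable_discont_dp[OF Rin] by simp
    obtain x where x: "max x0 0 < x" "x < max x0 0 + 1" "x \<notin> S'"
      using avoid_countable[OF cS', of "max x0 0" "max x0 0 + 1"] by auto
    have "R (ereal x0) \<le> R (ereal x)" using dp_props(3)[OF Rin] x(1) by (auto simp: mono_def)
    also have "R (ereal x) \<le> H x"
      by (rule Hge) (use low[of x] x S'_def F_def in auto)
    also have "H x = L (ereal x)" unfolding L_def using x(3) unfolding S'_def L_def
      by (intro lreg_cont_eq[OF gf, symmetric]) simp
    finally show False using x0 Linf by (simp add: epsinf_def)
  qed
  ultimately have "L = eps0" by simp
  have "\<nu> y = eps0"
  proof (rule eq_eps0_if[OF pn nu_in[OF pn]])
    fix x :: real assume "0 < x"
    have "1 = L (ereal x)" using \<open>L = eps0\<close> \<open>0 < x\<close> by (simp add: eps0_def)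
    also have "\<dots> \<le> H x" unfolding L_def by (rule lreg_le[OF gf])
    also have "\<dots> \<le> F 0 (ereal x)" by (rule HF)
    finally show "1 \<le> \<nu> y (ereal x)" by (simp add: F_def)
  qed
  then show ?thesis using nu_eps0_iff[OF pn] by simp
qed

end

lemma extract_sub:
  fixes f :: "nat \<Rightarrow> 'b \<Rightarrow> real"
  assumes "finite B" "\<And>n b. b \<in> B \<Longrightarrow> \<bar>f n b\<bar> \<le> M"
  shows "\<exists>r d. strict_mono r \<and> (\<forall>b\<in>B. (\<lambda>n. f (r n) b) \<longlonglongrightarrow> d b)"
  using assms
proof (induction B rule: finite_induct)
  case empty
  show ?case by (rule exI[of _ id]) (auto simp: strict_mono_def)
next
  case (insert b B)
  then obtain r d where r: "strict_mono r" "\<forall>b\<in>B. (\<lambda>n. f (r n) b) \<longlonglongrightarrow> d b" by auto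
  have "bounded (range (\<lambda>n. f (r n) b))"
    using insert.prems by (auto simp: bounded_iff intro!: exI[of _ M])
  then obtain l s where s: "strict_mono s" "((\<lambda>n. f (r n) b) \<circ> s) \<longlonglongrightarrow> l"
    using bounded_imp_convergent_subsequence by blast
  show ?case
  proof (intro exI conjI)
    show "strict_mono (\<lambda>n. r (s n))" by (rule strict_mono_compose[OF r(1) s(1)])
    show "\<forall>c\<in>insert b B. (\<lambda>n. f (r (s n)) c) \<longlonglongrightarrow> (d(b := l)) c"
    proof
      fix c assume "c \<in> insert b B"
      then show "(\<lambda>n. f (r (s n)) c) \<longlonglongrightarrow> (d(b := l)) c"
      proof
        assume "c = b" then show ?thesis using s(2) by (simp add: o_def)
      next
        assume "c \<in> B"
        then have "(\<lambda>n. f (r n) c) \<longlonglongrightarrow> d c" using r(2) by blast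
        from LIMSEQ_subseq_LIMSEQ[OF this s(1)] show ?thesis using \<open>c \<in> B\<close> insert.hyps(2)
          by (auto simp: o_def)
      qed
    qed
  qed
qed


context
  fixes \<nu> :: "'v::real_vector \<Rightarrow> dfun" and T Ts and A :: "'v set" and B :: "'v set"
  assumes pn: "pn_space \<nu> T Ts"
    and arch: "archimedean_tf Ts"
    and not_inf: "\<forall>p. \<nu> p \<noteq> epsinf"
    and A_ne: "A \<noteq> {}"
    and finB: "finite B" and indB: "independent B"
    and Db: "D_bounded \<nu> A"
begin

lemma coef_bounded:
  assumes xA: "\<And>n. xs n \<in> A" and xu: "\<And>n. xs n = (\<Sum>b\<in>B. u n b *\<^sub>R b)"
  shows "\<exists>M. \<forall>n. (\<Sum>b\<in>B. \<bar>u n b\<bar>) \<le> M"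
proof (rule ccontr)
  assume nb: "\<not> (\<exists>M. \<forall>n. (\<Sum>b\<in>B. \<bar>u n b\<bar>) \<le> M)"
  define S where "S n = (\<Sum>b\<in>B. \<bar>u n b\<bar>)" for n
  have "\<forall>k::nat. \<exists>n. real k < S n" using nb unfolding S_def by (meson not_le)
  then obtain \<sigma> where \<sigma>: "\<And>k. real k < S (\<sigma> k)" by metis
  have Spos: "0 < S (\<sigma> k)" for k using \<sigma>[of k] of_nat_0_le_iff[of k] by linarith
  define w where "w k b = u (\<sigma> k) b / S (\<sigma> k)" for k b
  have ule: "\<bar>u n b\<bar> \<le> S n" if "b \<in> B" for n b
    unfolding S_def by (rule member_le_sum) (use that finB in auto)
  have wle: "\<bar>w k b\<bar> \<le> 1" if "b \<in> B" for k b
    proof -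
    have Sk: "\<bar>S (\<sigma> k)\<bar> = S (\<sigma> k)" using Spos[of k] by simp
    have "\<bar>w k b\<bar> = \<bar>u (\<sigma> k) b\<bar> / S (\<sigma> k)" by (simp only: w_def abs_divide Sk)
    also have "\<dots> \<le> 1" using ule[OF that, of "\<sigma> k"] Spos[of k] by (simp only: divide_le_eq_1_pos)
    finally show ?thesis .
  qed
  have wsum: "(\<Sum>b\<in>B. \<bar>w k b\<bar>) = 1" for k
  proof -
    have Sk: "\<bar>S (\<sigma> k)\<bar> = S (\<sigma> k)" using Spos[of k] by simp
    have "(\<Sum>b\<in>B. \<bar>w k b\<bar>) = (\<Sum>b\<in>B. \<bar>u (\<sigma> k) b\<bar> / S (\<sigma> k))"
      by (rule sum.cong) (simp_all only: w_def abs_divide Sk)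
    also have "\<dots> = S (\<sigma> k) / S (\<sigma> k)" unfolding S_def by (rule sum_divide_distrib[symmetric])
    also have "\<dots> = 1" using Spos[of k] by simp
    finally show ?thesis .
  qed
  obtain \<rho> d where \<rho>: "strict_mono \<rho>" and wd: "\<And>b. b \<in> B \<Longrightarrow> (\<lambda>k. w (\<rho> k) b) \<longlonglongrightarrow> d b"
    using extract_sub[OF finB, of w 1] wle by blast
  have "(\<lambda>k. \<Sum>b\<in>B. \<bar>w (\<rho> k) b\<bar>) \<longlonglongrightarrow> (\<Sum>b\<in>B. \<bar>d b\<bar>)"
    by (intro tendsto_sum tendsto_rabs wd)
  then have dsum: "(\<Sum>b\<in>B. \<bar>d b\<bar>) = 1" using wsum by (simp add: LIMSEQ_const_iff)
  define y where "y = (\<Sum>b\<in>B. d b *\<^sub>R b)"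
  define R where "R = prob_radius \<nu> A"
  have RD: "R \<in> D_plus" using Db by (simp add: D_bounded_def R_def)
  have Rin: "R \<in> Delta_plus" using RD by (simp add: D_plus_def)
  have low: "R (ereal x) \<le> \<nu> (((2::real)^j) *\<^sub>R y) (ereal x)"
    if x: "0 < x" "isCont (\<lambda>t. R (ereal t)) x" for j x
  proof -
    define K :: real where "K = 2^j"
    have K: "0 < K" by (simp add: K_def)
    define z where "z k = (\<Sum>b\<in>B. (K * w (\<rho> k) b) *\<^sub>R b)" for k
    have "sconv \<nu> z (\<Sum>b\<in>B. (K * d b) *\<^sub>R b)"
      unfolding z_def by (rule sconv_sum[OF pn arch not_inf finB]) (intro tendsto_mult tendsto_const wd, assumption)
    moreover have "(\<Sum>b\<in>B. (K * d b) *\<^sub>R b) = K *\<^sub>R y"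
      by (simp add: y_def scaleR_sum_right)
    ultimately have sz: "sconv \<nu> z (K *\<^sub>R y)" by simp
    have zx: "z k = (K / S (\<sigma> (\<rho> k))) *\<^sub>R xs (\<sigma> (\<rho> k))" for k
      by (simp add: z_def xu[of "\<sigma> (\<rho> k)"] scaleR_sum_right w_def)
    obtain N :: nat where N: "K \<le> N" using real_arch_simple by blast
    have big: "R \<le> \<nu> (z k)" if "N \<le> k" for k
    proof -
      have "real k \<le> real (\<rho> k)" using seq_suble[OF \<rho>, of k] by simp
      then have "K \<le> S (\<sigma> (\<rho> k))" using N that \<sigma>[of "\<rho> k"] by linarith
      then have "\<bar>K / S (\<sigma> (\<rho> k))\<bar> \<le> \<bar>1\<bar>" using K Spos by (simp add: abs_div_pos divide_le_eq)
      then have "\<nu> (1 *\<^sub>R xs (\<sigma> (\<rho> k))) \<le> \<nu> (z k)" unfolding zx by (rule ray_abs[OF pn])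
      moreover have "R \<le> \<nu> (xs (\<sigma> (\<rho> k)))" unfolding R_def by (rule radius_le[OF pn A_ne xA])
      ultimately show ?thesis by simp
    qed
    define G where "G k = \<nu> (z k - K *\<^sub>R y)" for k
    have wG: "weak_conv G eps0" using sz unfolding G_def by (simp only: sconv_weak[OF pn])
    have h: "(\<forall>n. R \<in> Delta_plus \<and> G n \<in> Delta_plus)" using Rin nu_in[OF pn] by (simp add: G_def)
    have "weak_conv (\<lambda>n. T R (G n)) (T R eps0)"
      using contT[OF pn, unfolded continuous_tf_def, rule_format, OF conjI[OF h conjI[OF Rin conjI[OF eps0_in conjI[OF weak_const wG]]]]] .
    then have "weak_conv (\<lambda>n. T R (G n)) R" using tf_unit[OF tfT[OF pn] Rin] by simp
    then have lim: "(\<lambda>n. T R (G n) (ereal x)) \<longlonglongrightarrow> R (ereal x)" using x unfolding weak_conv_def by blast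
    have ev: "eventually (\<lambda>n. T R (G n) (ereal x) \<le> \<nu> (K *\<^sub>R y) (ereal x)) sequentially"
    proof (rule eventually_sequentiallyI[of N])
      fix k assume "N \<le> k"
      have "T R (G k) \<le> T (\<nu> (z k)) (G k)"
        by (rule tf_mono1[OF tfT[OF pn] Rin nu_in[OF pn] _ big[OF \<open>N \<le> k\<close>]]) (simp add: G_def nu_in[OF pn])
      also have "T (\<nu> (z k)) (G k) = T (\<nu> (z k)) (\<nu> (K *\<^sub>R y - z k))"
        unfolding G_def by (simp only: nu_diff_sym[OF pn, of "z k"])
      also have "\<dots> \<le> \<nu> (z k + (K *\<^sub>R y - z k))" by (rule nu_tri[OF pn])
      finally have "T R (G k) \<le> \<nu> (K *\<^sub>R y)" by simp
      then show "T R (G k) (ereal x) \<le> \<nu> (K *\<^sub>R y) (ereal x)" by (simp add: le_fun_def)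
    qed
    show ?thesis using tendsto_upperbound[OF lim ev] by (simp add: K_def)
  qed
  have "y = 0" by (rule ray_lower_zero[OF pn arch RD low])
  then have "\<forall>b\<in>B. d b = 0"
    using indB finB unfolding real_vector.independent_explicit_finite_subsets y_def by blast
  then have "(\<Sum>b\<in>B. \<bar>d b\<bar>) = 0" by simp
  then show False using dsum by simp
qed

lemma bounded_closed_compact:
  assumes spanB: "span B = UNIV" and cl: "strong_closed \<nu> A"
  shows "D_compact \<nu> A"
  unfolding D_compact_def
proof (intro allI impI)
  fix xs :: "nat \<Rightarrow> 'v" assume xA: "\<forall>n. xs n \<in> A"
  have "\<forall>n::nat. \<exists>u. xs n = (\<Sum>b\<in>B. u b *\<^sub>R b)"
  proof
    fix n
    have "xs n \<in> range (\<lambda>u. \<Sum>v\<in>B. u v *\<^sub>R v)" using real_vector.span_finite[OF finB] spanB by simp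
    then show "\<exists>u. xs n = (\<Sum>b\<in>B. u b *\<^sub>R b)" by blast
  qed
  then obtain u :: "nat \<Rightarrow> 'v \<Rightarrow> real" where xu: "\<And>n. xs n = (\<Sum>b\<in>B. u n b *\<^sub>R b)" by metis
  obtain M where M: "\<And>n. (\<Sum>b\<in>B. \<bar>u n b\<bar>) \<le> M" using coef_bounded[of xs u] xA xu by blast
  have uM: "\<bar>u n b\<bar> \<le> M" if "b \<in> B" for n b
  proof -
    have "\<bar>u n b\<bar> \<le> (\<Sum>b\<in>B. \<bar>u n b\<bar>)" by (rule member_le_sum) (use that finB in auto)
    then show ?thesis using M[of n] by linarith
  qed
  obtain \<rho> d where \<rho>: "strict_mono \<rho>" and ud: "\<And>b. b \<in> B \<Longrightarrow> (\<lambda>k. u (\<rho> k) b) \<longlonglongrightarrow> d b"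
    using extract_sub[OF finB, of u M] uM by blast
  define p where "p = (\<Sum>b\<in>B. d b *\<^sub>R b)"
  have "sconv \<nu> (\<lambda>k. \<Sum>b\<in>B. u (\<rho> k) b *\<^sub>R b) p"
    unfolding p_def by (rule sconv_sum[OF pn arch not_inf finB ud])
  then have sc: "sconv \<nu> (xs \<circ> \<rho>) p" by (simp add: o_def xu)
  have "p \<in> A"
  proof (rule ccontr)
    assume "p \<notin> A"
    then obtain l where l: "0 < l" "strong_nbhd \<nu> p l \<subseteq> - A"
      using cl unfolding strong_closed_def strong_open_def by blast
    have "eventually (\<lambda>m. (xs \<circ> \<rho>) m \<in> strong_nbhd \<nu> p l) sequentially"
      using sc l(1) unfolding sconv_strong[OF pn] strong_conv_def by blast
    then have "eventually (\<lambda>m. False) sequentially"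
    proof eventually_elim
      case (elim m)
      then have "xs (\<rho> m) \<in> - A" using l(2) by (auto simp: o_def)
      then show False using xA by blast
    qed
    then show False by simp
  qed
  then show "\<exists>r p. strict_mono r \<and> p \<in> A \<and> strong_conv \<nu> (xs \<circ> r) p"
    using \<rho> sc sconv_strong[OF pn] by blast
qed

end

theorem theorem28:
  fixes \<nu> :: "'v::real_vector \<Rightarrow> dfun" and T Ts :: "dfun \<Rightarrow> dfun \<Rightarrow> dfun"
    and \<nu>' :: "real \<Rightarrow> dfun" and T' Ts' :: "dfun \<Rightarrow> dfun \<Rightarrow> dfun"
    and A :: "'v set"
  assumes findim: "\<exists>B. finite B \<and> span B = (UNIV :: 'v set)"
    and pn: "pn_space \<nu> T Ts"
    and arch: "archimedean_tf Ts"
    and not_inf: "\<forall>p. \<nu> p \<noteq> epsinf"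
    and nuD: "\<forall>p. \<nu> p \<in> D_plus"
    and TD: "\<forall>F\<in>D_plus. \<forall>G\<in>D_plus. T F G \<in> D_plus"
    and pn': "pn_space \<nu>' T' Ts'"
    and arch': "archimedean_tf Ts'"
    and not_inf': "\<forall>r. \<nu>' r \<noteq> epsinf"
    and LG: "LG_property \<nu>'"
    and A_ne: "A \<noteq> {}"
  shows "D_compact \<nu> A \<longleftrightarrow> D_bounded \<nu> A \<and> strong_closed \<nu> A"
proof
  assume "D_compact \<nu> A"
  then show "D_bounded \<nu> A \<and> strong_closed \<nu> A"
    using compact_bounded[OF pn A_ne _ nuD] compact_closed[OF pn A_ne] by blast
next
  assume h: "D_bounded \<nu> A \<and> strong_closed \<nu> A"
  obtain B0 where B0: "finite B0" "span B0 = (UNIV :: 'v set)" using findim by blast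
  obtain B where B: "B \<subseteq> B0" "independent B" "B0 \<subseteq> span B"
    using real_vector.maximal_independent_subset[of B0] by blast
  have finB: "finite B" using B(1) B0(1) finite_subset by blast
  have "span B0 \<subseteq> span B" using B(3) real_vector.span_minimal real_vector.subspace_span by blast
  then have spanB: "span B = UNIV" using B0(2) by blast
  show "D_compact \<nu> A"
    by (rule bounded_closed_compact[OF pn arch not_inf A_ne finB B(2)]) (use h spanB in auto)
qed


end
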